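(* Let $X$ be a finite cycle set and $x\in X$. The following are equivalent: (1) $X=\langle x\rangle$; (2) there is a finite brace $B$ such that $X\subseteq B$ (with the cycle set structure of $X$ being the one induced from $B$), $X=\{\lambda_b(x) : b\in B\}$, and $B=B(x)$.
   Context: A cycle set is a non-empty set $X$ with one operation $\cdot$ such that each $\sigma_x:y\mapsto x\cdot y$ is bijective and $(x\cdot y)\cdot(x\cdot z)=(y\cdot x)\cdot(y\cdot z)$ for all $x,y,z$. A sub-cycle set is a subset that is again a cycle set under the restricted operation; $\langle x\rangle$ is the smallest sub-cycle set containing $x$. A brace is a triple $(B,+,\circ)$ with $(B,+)$ an abelian group, $(B,\circ)$ a group, and $a\circ(b+c)=a\circ b-a+a\circ c$; $\lambda_a(b):=-a+a\circ b$, $a^-$ is the inverse of $a$ in $(B,\circ)$, and $B$ is a cycle set via $a\cdot b:=\lambda_{a^-}(b)$. $B(x)$ is the smallest subset of $B$ containing $x$ that is a subgroup of both $(B,+)$ and $(B,\circ)$. *)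

theory Defs
  imports "HOL-Algebra.Algebra"
begin

definition cycle_set :: "'a set \<Rightarrow> ('a \<Rightarrow> 'a \<Rightarrow> 'a) \<Rightarrow> bool" where
  "cycle_set Cs opr \<longleftrightarrow>
     Cs \<noteq> {} \<and>
     (\<forall>x\<in>Cs. \<forall>y\<in>Cs. opr x y \<in> Cs) \<and>
     (\<forall>x\<in>Cs. bij_betw (opr x) Cs Cs) \<and>
     (\<forall>x\<in>Cs. \<forall>y\<in>Cs. \<forall>z\<in>Cs. opr (opr x y) (opr x z) = opr (opr y x) (opr y z))"

definition sub_cycle_set :: "'a set \<Rightarrow> 'a set \<Rightarrow> ('a \<Rightarrow> 'a \<Rightarrow> 'a) \<Rightarrow> bool" where
  "sub_cycle_set Y Cs opr \<longleftrightarrow> Y \<subseteq> Cs \<and> cycle_set Y opr"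

definition gen_cycle :: "'a set \<Rightarrow> ('a \<Rightarrow> 'a \<Rightarrow> 'a) \<Rightarrow> 'a \<Rightarrow> 'a set" where
  "gen_cycle Cs opr x = \<Inter>{Y. sub_cycle_set Y Cs opr \<and> x \<in> Y}"

text \<open>A brace is given as a ring-like record R: (carrier R, additive part) an abelian
group, (carrier R, multiplicative part = circ) a group, and
a o (b + c) = a o b - a + a o c.\<close>
definition brace :: "('b, 'm) ring_scheme \<Rightarrow> bool" where
  "brace R \<longleftrightarrow> abelian_group R \<and> group R \<and>
     (\<forall>a\<in>carrier R. \<forall>b\<in>carrier R. \<forall>c\<in>carrier R.
        a \<otimes>\<^bsub>R\<^esub> (b \<oplus>\<^bsub>R\<^esub> c) =
        ((a \<otimes>\<^bsub>R\<^esub> b) \<oplus>\<^bsub>R\<^esub> (\<ominus>\<^bsub>R\<^esub> a)) \<oplus>\<^bsub>R\<^esub> (a \<otimes>\<^bsub>R\<^esub> c))"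

definition brace_lambda :: "('b, 'm) ring_scheme \<Rightarrow> 'b \<Rightarrow> 'b \<Rightarrow> 'b" where
  "brace_lambda R a b = (\<ominus>\<^bsub>R\<^esub> a) \<oplus>\<^bsub>R\<^esub> (a \<otimes>\<^bsub>R\<^esub> b)"

definition brace_cycle_op :: "('b, 'm) ring_scheme \<Rightarrow> 'b \<Rightarrow> 'b \<Rightarrow> 'b" where
  "brace_cycle_op R a b = brace_lambda R (inv\<^bsub>R\<^esub> a) b"

definition brace_gen :: "('b, 'm) ring_scheme \<Rightarrow> 'b \<Rightarrow> 'b set" where
  "brace_gen R x = \<Inter>{S. x \<in> S \<and> additive_subgroup S R \<and> subgroup S R}"

end

theory Submission
  imports Defs "HOL-Combinatorics.Cycles"
begin


locale brc = abelian_group R + group R for R (structure) +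
  assumes distr: "\<And>a b c. a \<in> carrier R \<Longrightarrow> b \<in> carrier R \<Longrightarrow> c \<in> carrier R \<Longrightarrow>
        a \<otimes> (b \<oplus> c) = ((a \<otimes> b) \<oplus> (\<ominus> a)) \<oplus> (a \<otimes> c)"

lemma brace_brc: "brace R \<Longrightarrow> brc R"
  unfolding brace_def brc_def brc_axioms_def by auto

context brc begin

abbreviation lam where "lam \<equiv> brace_lambda R"

lemma zero_one: "\<zero> = \<one>"
proof -
  have "\<one> \<otimes> (\<zero> \<oplus> \<zero>) = ((\<one> \<otimes> \<zero>) \<oplus> (\<ominus> \<one>)) \<oplus> (\<one> \<otimes> \<zero>)"
    by (rule distr) auto
  hence "\<zero> = (\<zero> \<oplus> \<ominus> \<one>) \<oplus> \<zero>" by simp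
  hence "\<zero> = \<ominus> \<one>" by simp
  hence "\<one> \<oplus> \<zero> = \<one> \<oplus> \<ominus> \<one>" by simp
  thus ?thesis by (simp add: r_neg)
qed

lemma lam_closed[simp]: "a \<in> carrier R \<Longrightarrow> b \<in> carrier R \<Longrightarrow> lam a b \<in> carrier R"
  unfolding brace_lambda_def by simp

lemma mult_eq: "a \<in> carrier R \<Longrightarrow> b \<in> carrier R \<Longrightarrow> a \<otimes> b = a \<oplus> lam a b"
  unfolding brace_lambda_def by (simp add: r_neg2)

lemma lam_add: "a \<in> carrier R \<Longrightarrow> b \<in> carrier R \<Longrightarrow> c \<in> carrier R \<Longrightarrow>
   lam a (b \<oplus> c) = lam a b \<oplus> lam a c"
  unfolding brace_lambda_def using distr by (simp add: a_ac)

lemma lam_zero: "a \<in> carrier R \<Longrightarrow> lam a \<zero> = \<zero>"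
proof -
  assume a: "a \<in> carrier R"
  have "a \<otimes> \<zero> = a" using a by (simp add: zero_one)
  thus ?thesis unfolding brace_lambda_def using a by (simp add: l_neg)
qed

lemma lam_neg: "a \<in> carrier R \<Longrightarrow> b \<in> carrier R \<Longrightarrow> lam a (\<ominus> b) = \<ominus> lam a b"
proof -
  assume a: "a \<in> carrier R" and b: "b \<in> carrier R"
  have "lam a (\<ominus> b) \<oplus> lam a b = \<zero>"
    using lam_add[OF a, of "\<ominus> b" b] a b by (simp add: l_neg lam_zero)
  thus ?thesis using a b by (simp add: minus_equality)
qed

lemma lam_one: "b \<in> carrier R \<Longrightarrow> lam \<one> b = b"
proof -
  assume b: "b \<in> carrier R"
  have h0: "\<ominus> \<zero> = \<zero>" by (rule minus_equality) simp_all
  have h1: "\<ominus> \<one> = \<zero>" using h0 zero_one by metis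
  have h2: "\<one> \<otimes> b = b" using b by simp
  have "lam \<one> b = \<zero> \<oplus> b" unfolding brace_lambda_def h1 h2 by (rule refl)
  thus ?thesis using b by simp
qed

lemma lam_mult: "a \<in> carrier R \<Longrightarrow> b \<in> carrier R \<Longrightarrow> c \<in> carrier R \<Longrightarrow>
   lam (a \<otimes> b) c = lam a (lam b c)"
proof -
  assume a: "a \<in> carrier R" and b: "b \<in> carrier R" and c: "c \<in> carrier R"
  have "lam a (lam b c) = lam a (\<ominus> b) \<oplus> lam a (b \<otimes> c)"
    unfolding brace_lambda_def[of R b c] using a b c by (simp add: lam_add)
  also have "\<dots> = \<ominus> (lam a b) \<oplus> lam a (b \<otimes> c)"
    using a b c by (simp add: lam_neg)
  also have "\<dots> = \<ominus> (\<ominus> a \<oplus> a \<otimes> b) \<oplus> (\<ominus> a \<oplus> a \<otimes> (b \<otimes> c))"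
    unfolding brace_lambda_def by simp
  also have "\<dots> = \<ominus> (a \<otimes> b) \<oplus> (a \<otimes> b) \<otimes> c"
    using a b c by (simp add: minus_add m_assoc a_ac r_neg1 r_neg2)
  finally show ?thesis unfolding brace_lambda_def by simp
qed

lemma lam_inv: "a \<in> carrier R \<Longrightarrow> c \<in> carrier R \<Longrightarrow> lam a (lam (inv a) c) = c"
  by (simp add: lam_mult[symmetric] lam_one)

lemma lam_inv2: "a \<in> carrier R \<Longrightarrow> c \<in> carrier R \<Longrightarrow> lam (inv a) (lam a c) = c"
  by (simp add: lam_mult[symmetric] lam_one)

lemma add_eq: "a \<in> carrier R \<Longrightarrow> b \<in> carrier R \<Longrightarrow> a \<oplus> b = a \<otimes> lam (inv a) b"
  by (simp add: mult_eq lam_inv)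

lemma lam_addl: "a \<in> carrier R \<Longrightarrow> b \<in> carrier R \<Longrightarrow> c \<in> carrier R \<Longrightarrow>
   lam (a \<oplus> b) c = lam a (lam (lam (inv a) b) c)"
  by (simp add: add_eq lam_mult)

end


primrec lsum :: "('b, 'm) ring_scheme \<Rightarrow> 'b list \<Rightarrow> 'b" where
  "lsum R [] = \<zero>\<^bsub>R\<^esub>"
| "lsum R (y # ys) = y \<oplus>\<^bsub>R\<^esub> lsum R ys"

context brc begin

lemma lsum_closed: "set ys \<subseteq> carrier R \<Longrightarrow> lsum R ys \<in> carrier R"
  by (induction ys) auto

lemma lsum_append: "set xs \<subseteq> carrier R \<Longrightarrow> set ys \<subseteq> carrier R \<Longrightarrow>
  lsum R (xs @ ys) = lsum R xs \<oplus> lsum R ys"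
  by (induction xs) (auto simp: lsum_closed a_assoc)

lemma lam_lsum: "a \<in> carrier R \<Longrightarrow> set ys \<subseteq> carrier R \<Longrightarrow>
  lam a (lsum R ys) = lsum R (map (lam a) ys)"
  by (induction ys) (auto simp: lam_zero lam_add lsum_closed)

lemma orbit_in:
  assumes fin: "finite (carrier R)" and Y: "Y \<subseteq> carrier R"
    and cl: "\<And>y z. y \<in> Y \<Longrightarrow> z \<in> Y \<Longrightarrow> lam (inv y) z \<in> Y"
    and x: "x \<in> Y" and b: "b \<in> brace_gen R x"
  shows "lam b x \<in> Y"
proof -
  have finY: "finite Y" using fin Y finite_subset by blast
  have lamY: "lam y z \<in> Y" if y: "y \<in> Y" and z: "z \<in> Y" for y z
  proof -
    have yc: "y \<in> carrier R" using y Y by auto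
    have "inj_on (lam (inv y)) Y"
      by (rule inj_onI) (metis lam_inv yc Y subsetD)
    hence "lam (inv y) ` Y = Y" using cl[OF y] finY by (intro endo_inj_surj) auto
    then obtain w where w: "w \<in> Y" "z = lam (inv y) w" using z by force
    thus ?thesis using lam_inv yc Y by auto
  qed
  define A where "A = {lsum R ys | ys. set ys \<subseteq> Y}"
  have AC: "A \<subseteq> carrier R" unfolding A_def using Y lsum_closed by auto
  have key: "\<forall>ys. length ys = n \<longrightarrow> set ys \<subseteq> Y \<longrightarrow> (\<forall>z\<in>Y. lam (lsum R ys) z \<in> Y)" for n
  proof (induction n)
    case 0
    then show ?case using Y by (auto simp: zero_one lam_one)
  next
    case (Suc n)
    show ?case
    proof (intro allI impI ballI)
      fix ys z assume l: "length ys = Suc n" and s: "set ys \<subseteq> Y" and z: "z \<in> Y"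
      obtain y ys' where ys: "ys = y # ys'" using l by (cases ys) auto
      have y: "y \<in> Y" and s': "set ys' \<subseteq> Y" using s ys by auto
      have yc: "y \<in> carrier R" using y Y by auto
      have s'c: "set ys' \<subseteq> carrier R" using s' Y by auto
      have e: "lam (inv y) (lsum R ys') = lsum R (map (lam (inv y)) ys')"
        using yc s'c by (simp add: lam_lsum)
      have "set (map (lam (inv y)) ys') \<subseteq> Y" using s' cl y by auto
      moreover have "length (map (lam (inv y)) ys') = n" using l ys by simp
      ultimately have "lam (lam (inv y) (lsum R ys')) z \<in> Y" using Suc z e by auto
      moreover have "lam (lsum R ys) z = lam y (lam (lam (inv y) (lsum R ys')) z)"
        using ys yc s'c z Y by (auto simp: lam_addl lsum_closed)
      ultimately show "lam (lsum R ys) z \<in> Y" using lamY y by auto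
    qed
  qed
  have AY: "a \<in> A \<Longrightarrow> z \<in> Y \<Longrightarrow> lam a z \<in> Y" for a z
    using key unfolding A_def by blast
  have AA: "a \<in> A \<Longrightarrow> c \<in> A \<Longrightarrow> lam a c \<in> A" for a c
  proof -
    assume a: "a \<in> A" and c: "c \<in> A"
    then obtain ys where ys: "c = lsum R ys" "set ys \<subseteq> Y" unfolding A_def by auto
    have "lam a c = lsum R (map (lam a) ys)" using ys a AC Y by (auto simp: lam_lsum)
    moreover have "set (map (lam a) ys) \<subseteq> Y" using ys AY a by auto
    ultimately show ?thesis unfolding A_def by blast
  qed
  have Aadd: "a \<in> A \<Longrightarrow> c \<in> A \<Longrightarrow> a \<oplus> c \<in> A" for a c
  proof -
    assume "a \<in> A" "c \<in> A"
    then obtain xs ys where "a = lsum R xs" "set xs \<subseteq> Y" "c = lsum R ys" "set ys \<subseteq> Y"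
      unfolding A_def by auto
    thus ?thesis unfolding A_def using Y
      by (auto intro!: exI[of _ "xs @ ys"] simp: lsum_append)
  qed
  have Amul: "a \<in> A \<Longrightarrow> c \<in> A \<Longrightarrow> a \<otimes> c \<in> A" for a c
    using mult_eq AC Aadd AA by (metis subsetD)
  have A0: "\<zero> \<in> A" unfolding A_def by (auto intro!: exI[of _ "[]"])
  have xA: "x \<in> A" unfolding A_def using x Y
    by (auto intro!: exI[of _ "[x]"])
  have finA: "finite A" using fin AC finite_subset by blast
  have Aneg: "\<ominus> a \<in> A" if a: "a \<in> A" for a
  proof -
    have ac: "a \<in> carrier R" using a AC by auto
    have "inj_on (\<lambda>c. a \<oplus> c) A"
    proof (rule inj_onI)
      fix u v assume u: "u \<in> A" and v: "v \<in> A" and e: "a \<oplus> u = a \<oplus> v"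
      have uc: "u \<in> carrier R" and vc: "v \<in> carrier R" using u v AC by auto
      have "\<ominus> a \<oplus> (a \<oplus> u) = \<ominus> a \<oplus> (a \<oplus> v)" using e by simp
      thus "u = v" using r_neg1[OF ac uc] r_neg1[OF ac vc] by simp
    qed
    moreover have "(\<lambda>c. a \<oplus> c) ` A \<subseteq> A" using Aadd a by auto
    ultimately have "(\<lambda>c. a \<oplus> c) ` A = A" using finA by (intro endo_inj_surj)
    then obtain c where c: "c \<in> A" "\<zero> = a \<oplus> c" using A0 by (metis imageE)
    hence "\<ominus> a = c" using ac AC by (metis a_comm minus_equality subsetD)
    thus ?thesis using c by simp
  qed
  have Ainv: "inv a \<in> A" if a: "a \<in> A" for a
  proof -
    have ac: "a \<in> carrier R" using a AC by auto
    have "inj_on (\<lambda>c. a \<otimes> c) A"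
    proof (rule inj_onI)
      fix u v assume u: "u \<in> A" and v: "v \<in> A" and e: "a \<otimes> u = a \<otimes> v"
      have uc: "u \<in> carrier R" and vc: "v \<in> carrier R" using u v AC by auto
      have "inv a \<otimes> (a \<otimes> u) = inv a \<otimes> (a \<otimes> v)" using e by simp
      thus "u = v" using ac uc vc by (simp add: m_assoc[symmetric])
    qed
    moreover have "(\<lambda>c. a \<otimes> c) ` A \<subseteq> A" using Amul a by auto
    ultimately have "(\<lambda>c. a \<otimes> c) ` A = A" using finA by (intro endo_inj_surj)
    then obtain c where c: "c \<in> A" "\<zero> = a \<otimes> c" using A0 by (metis imageE)
    have cc: "c \<in> carrier R" using c AC by auto
    have ac1: "a \<otimes> c = \<one>" using c(2) zero_one by simp
    have "inv a = inv a \<otimes> (a \<otimes> c)" unfolding ac1 using ac by simp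
    also have "\<dots> = c" using ac cc by (simp add: m_assoc[symmetric])
    finally have "inv a = c" .
    thus ?thesis using c by simp
  qed
  have sub: "subgroup A R"
    by (rule subgroupI) (use AC xA Ainv Amul in auto)
  have asub: "additive_subgroup A R"
  proof (rule additive_subgroupI)
    show "subgroup A (add_monoid R)"
      by (rule group.subgroupI[OF a_group]) (use AC xA Aneg Aadd in \<open>auto simp: a_inv_def\<close>)
  qed
  have "brace_gen R x \<subseteq> A" unfolding brace_gen_def using sub asub xA by blast
  thus ?thesis using b AY x by auto
qed

end



lemma cycle_setD:
  assumes "cycle_set Cs opr"
  shows "Cs \<noteq> {}" "\<And>x y. x \<in> Cs \<Longrightarrow> y \<in> Cs \<Longrightarrow> opr x y \<in> Cs"
    "\<And>x. x \<in> Cs \<Longrightarrow> bij_betw (opr x) Cs Cs"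
    "\<And>x y z. x \<in> Cs \<Longrightarrow> y \<in> Cs \<Longrightarrow> z \<in> Cs \<Longrightarrow> opr (opr x y) (opr x z) = opr (opr y x) (opr y z)"
  using assms unfolding cycle_set_def by auto

lemma closed_cycle_set:
  assumes cs: "cycle_set Cs opr" and Y: "Y \<subseteq> Cs" "finite Y" "Y \<noteq> {}"
    and cl: "\<And>y z. y \<in> Y \<Longrightarrow> z \<in> Y \<Longrightarrow> opr y z \<in> Y"
  shows "cycle_set Y opr"
proof -
  have "bij_betw (opr y) Y Y" if y: "y \<in> Y" for y
  proof -
    have "inj_on (opr y) Cs" using cycle_setD(3)[OF cs] y Y bij_betw_def by blast
    hence inj: "inj_on (opr y) Y" using Y inj_on_subset by blast
    moreover have "opr y ` Y = Y" using endo_inj_surj[OF Y(2) _ inj] cl y by auto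
    ultimately show ?thesis unfolding bij_betw_def by auto
  qed
  moreover have "\<forall>x\<in>Y. \<forall>y\<in>Y. \<forall>z\<in>Y. opr (opr x y) (opr x z) = opr (opr y x) (opr y z)"
    using Y(1) cycle_setD(4)[OF cs] by (meson subsetD)
  ultimately show ?thesis unfolding cycle_set_def using Y(3) cl by (intro conjI ballI) auto
qed

lemma gen_cycle_props:
  assumes cs: "cycle_set Cs opr" and fin: "finite Cs" and x: "x \<in> Cs"
  shows "gen_cycle Cs opr x \<subseteq> Cs" "x \<in> gen_cycle Cs opr x"
    "\<And>y z. y \<in> gen_cycle Cs opr x \<Longrightarrow> z \<in> gen_cycle Cs opr x \<Longrightarrow> opr y z \<in> gen_cycle Cs opr x"
    "\<And>Z. Z \<subseteq> Cs \<Longrightarrow> x \<in> Z \<Longrightarrow> (\<And>y z. y \<in> Z \<Longrightarrow> z \<in> Z \<Longrightarrow> opr y z \<in> Z) \<Longrightarrow> gen_cycle Cs opr x \<subseteq> Z"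
proof -
  have "sub_cycle_set Cs Cs opr" unfolding sub_cycle_set_def using cs by simp
  hence "Cs \<in> {Y. sub_cycle_set Y Cs opr \<and> x \<in> Y}" using x by simp
  thus "gen_cycle Cs opr x \<subseteq> Cs" unfolding gen_cycle_def by (rule Inter_lower)
  show "x \<in> gen_cycle Cs opr x" unfolding gen_cycle_def by simp
  show "opr y z \<in> gen_cycle Cs opr x" if yz: "y \<in> gen_cycle Cs opr x" "z \<in> gen_cycle Cs opr x" for y z
  proof -
    have "opr y z \<in> Y" if Y: "sub_cycle_set Y Cs opr" "x \<in> Y" for Y
    proof -
      have "y \<in> Y" "z \<in> Y" using Y yz unfolding gen_cycle_def by simp_all
      moreover have "cycle_set Y opr" using Y(1) unfolding sub_cycle_set_def by simp
      ultimately show ?thesis using cycle_setD(2) by metis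
    qed
    thus ?thesis unfolding gen_cycle_def by simp
  qed
  show "gen_cycle Cs opr x \<subseteq> Z" if Z: "Z \<subseteq> Cs" "x \<in> Z" "\<And>y z. y \<in> Z \<Longrightarrow> z \<in> Z \<Longrightarrow> opr y z \<in> Z" for Z
  proof -
    have "Z \<noteq> {}" using Z(2) by auto
    hence "cycle_set Z opr" using closed_cycle_set[OF cs Z(1) finite_subset[OF Z(1) fin] _ Z(3)] by simp
    hence "Z \<in> {Y. sub_cycle_set Y Cs opr \<and> x \<in> Y}" using Z unfolding sub_cycle_set_def by simp
    thus ?thesis unfolding gen_cycle_def by (rule Inter_lower)
  qed
qed

lemma sq_surj:
  assumes "finite Y" "cycle_set Y opr"
  shows "(\<lambda>z. opr z z) ` Y = Y"
  using assms
proof (induction "card Y" arbitrary: Y rule: less_induct)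
  case less
  note cs = less.prems(2) and finY = less.prems(1)
  define Z where "Z = (\<lambda>z. opr z z) ` Y"
  have ZY: "Z \<subseteq> Y" unfolding Z_def using cycle_setD(2)[OF cs] by blast
  have Zcl: "opr z w \<in> Z" if z: "z \<in> Y" and w: "w \<in> Z" for z w
  proof -
    obtain u where u: "u \<in> Y" "w = opr u u" using w unfolding Z_def by blast
    have "opr u ` Y = Y" using cycle_setD(3)[OF cs u(1)] unfolding bij_betw_def by simp
    hence "z \<in> opr u ` Y" using z by simp
    then obtain y where y: "y \<in> Y" "z = opr u y" by blast
    have "opr z w = opr (opr y u) (opr y u)" using cycle_setD(4)[OF cs u(1) y(1) u(1)] u y by simp
    moreover have "opr y u \<in> Y" using cycle_setD(2)[OF cs y(1) u(1)] .
    ultimately show ?thesis unfolding Z_def by blast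
  qed
  show ?case
  proof (rule ccontr)
    assume ne: "(\<lambda>z. opr z z) ` Y \<noteq> Y"
    define W where "W = Y - Z"
    have Wne: "W \<noteq> {}" using ne ZY unfolding W_def Z_def by blast
    have WY: "W \<subseteq> Y" unfolding W_def by blast
    have finZ: "finite Z" using finite_subset[OF ZY finY] .
    have Wcl: "opr z w \<in> W" if z: "z \<in> Y" and w: "w \<in> W" for z w
    proof -
      have inj: "inj_on (opr z) Y" using cycle_setD(3)[OF cs z] unfolding bij_betw_def by simp
      have injZ: "inj_on (opr z) Z" using inj_on_subset[OF inj ZY] .
      have sub: "opr z ` Z \<subseteq> Z" using Zcl z by blast
      have eq: "opr z ` Z = Z" using endo_inj_surj[OF finZ sub injZ] .
      have wY: "w \<in> Y" and wZ: "w \<notin> Z" using w unfolding W_def by simp_all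
      have "opr z w \<in> Y" using cycle_setD(2)[OF cs z wY] .
      moreover have "opr z w \<notin> Z"
      proof
        assume "opr z w \<in> Z"
        then obtain v where v: "v \<in> Z" "opr z w = opr z v" using eq by (metis imageE)
        have "w = v" using inj_onD[OF inj v(2) wY] v(1) ZY by blast
        thus False using v(1) wZ by simp
      qed
      ultimately show ?thesis unfolding W_def by simp
    qed
    have csW: "cycle_set W opr"
      by (rule closed_cycle_set[OF cs WY finite_subset[OF WY finY] Wne]) (use Wcl WY in blast)
    have "card W < card Y"
    proof -
      have "Y \<noteq> {}" using cycle_setD(1)[OF cs] .
      hence "Z \<noteq> {}" unfolding Z_def by simp
      hence "W \<subset> Y" using ZY unfolding W_def by blast
      thus ?thesis using finY psubset_card_mono by blast
    qed
    hence "(\<lambda>z. opr z z) ` W = W" using less.hyps[OF _ finite_subset[OF WY finY] csW] by simp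
    moreover have "(\<lambda>z. opr z z) ` W \<subseteq> Z" using WY unfolding Z_def by blast
    ultimately show False using Wne unfolding W_def by blast
  qed
qed



abbreviation pinv :: "('a \<Rightarrow> 'b) \<Rightarrow> ('b \<Rightarrow> 'a)" where "pinv f \<equiv> Hilbert_Choice.inv f"

locale fcs =
  fixes Cs :: "'a set" and opr :: "'a \<Rightarrow> 'a \<Rightarrow> 'a"
  assumes cs: "cycle_set Cs opr" and fin: "finite Cs"
begin

definition S :: "'a \<Rightarrow> 'a \<Rightarrow> 'a" where "S y = (\<lambda>z. if z \<in> Cs then opr y z else z)"
definition T :: "'a \<Rightarrow> 'a \<Rightarrow> 'a" where "T y = pinv (S y)"
definition F :: "'a \<Rightarrow> ('a \<Rightarrow> 'a) \<Rightarrow> ('a \<Rightarrow> 'a)" where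
  "F y p = (if y \<in> Cs \<and> p permutes Cs then p \<circ> T (pinv p y) else p)"

lemma S_perm: "y \<in> Cs \<Longrightarrow> S y permutes Cs"
proof (rule bij_imp_permutes)
  assume y: "y \<in> Cs"
  show "bij_betw (S y) Cs Cs"
    using cycle_setD(3)[OF cs y] by (rule bij_betw_cong[THEN iffD1, rotated]) (simp add: S_def)
  show "S y x = x" if "x \<notin> Cs" for x using that by (simp add: S_def)
qed

lemma T_perm: "y \<in> Cs \<Longrightarrow> T y permutes Cs"
  unfolding T_def by (rule permutes_inv[OF S_perm])

lemma S_key: "u \<in> Cs \<Longrightarrow> w \<in> Cs \<Longrightarrow> S (opr u w) \<circ> S u = S (opr w u) \<circ> S w"
proof (rule ext)
  fix z assume u: "u \<in> Cs" and w: "w \<in> Cs"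
  show "(S (opr u w) \<circ> S u) z = (S (opr w u) \<circ> S w) z"
  proof (cases "z \<in> Cs")
    case True
    then show ?thesis using cycle_setD(2)[OF cs] cycle_setD(4)[OF cs u w True] u w by (simp add: S_def)
  next
    case False
    then show ?thesis by (simp add: S_def)
  qed
qed

lemma TT: "u \<in> Cs \<Longrightarrow> w \<in> Cs \<Longrightarrow> T u \<circ> T (S u w) = T w \<circ> T (S w u)"
proof -
  assume u: "u \<in> Cs" and w: "w \<in> Cs"
  have uw: "opr u w \<in> Cs" "opr w u \<in> Cs" using cycle_setD(2)[OF cs u w] cycle_setD(2)[OF cs w u] by auto
  have s1: "S u w = opr u w" "S w u = opr w u" using u w by (simp_all add: S_def)
  have "T u \<circ> T (S u w) = pinv (S (opr u w) \<circ> S u)"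
    unfolding T_def s1 using o_inv_distrib[OF permutes_bij[OF S_perm[OF uw(1)]] permutes_bij[OF S_perm[OF u]]]
    by simp
  also have "\<dots> = pinv (S (opr w u) \<circ> S w)" using S_key u w by simp
  also have "\<dots> = T w \<circ> T (S w u)"
    unfolding T_def s1 using o_inv_distrib[OF permutes_bij[OF S_perm[OF uw(2)]] permutes_bij[OF S_perm[OF w]]]
    by simp
  finally show ?thesis .
qed

lemma F_perm: "p permutes Cs \<Longrightarrow> F y p permutes Cs"
proof -
  assume p: "p permutes Cs"
  show ?thesis
  proof (cases "y \<in> Cs")
    case True
    hence "pinv p y \<in> Cs" using permutes_inv[OF p] by (simp add: permutes_in_image)
    thus ?thesis using True p permutes_compose[OF T_perm p] by (simp add: F_def)
  next
    case False
    thus ?thesis using p by (simp add: F_def)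
  qed
qed

lemma inv_comp_perm: "p permutes Cs \<Longrightarrow> q permutes Cs \<Longrightarrow> pinv (p \<circ> q) = pinv q \<circ> pinv p"
  by (simp add: o_inv_distrib permutes_bij)

lemma F_comm: "F y (F z p) = F z (F y p)"
proof (cases "y \<in> Cs \<and> z \<in> Cs \<and> p permutes Cs")
  case True
  hence y: "y \<in> Cs" and z: "z \<in> Cs" and p: "p permutes Cs" by auto
  define a where "a = pinv p z"
  define b where "b = pinv p y"
  have a: "a \<in> Cs" unfolding a_def using permutes_inv[OF p] z by (simp add: permutes_in_image)
  have b: "b \<in> Cs" unfolding b_def using permutes_inv[OF p] y by (simp add: permutes_in_image)
  have Fz: "F z p = p \<circ> T a" using z p by (simp add: F_def a_def)
  have Fy: "F y p = p \<circ> T b" using y p by (simp add: F_def b_def)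
  have pa: "p \<circ> T a permutes Cs" using permutes_compose[OF T_perm[OF a] p] .
  have pb: "p \<circ> T b permutes Cs" using permutes_compose[OF T_perm[OF b] p] .
  have i1: "pinv (p \<circ> T a) y = S a b"
    using inv_comp_perm[OF p T_perm[OF a]] permutes_inv_inv[OF S_perm[OF a]]
    by (simp add: T_def b_def)
  have i2: "pinv (p \<circ> T b) z = S b a"
    using inv_comp_perm[OF p T_perm[OF b]] permutes_inv_inv[OF S_perm[OF b]]
    by (simp add: T_def a_def)
  have "F y (F z p) = p \<circ> (T a \<circ> T (S a b))" using Fz pa y i1 by (simp add: F_def o_assoc)
  also have "\<dots> = p \<circ> (T b \<circ> T (S b a))" using TT[OF a b] by simp
  also have "\<dots> = F z (F y p)" using Fy pb z i2 by (simp add: F_def o_assoc)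
  finally show ?thesis .
next
  case False
  then show ?thesis
  proof (cases "p permutes Cs")
    case True
    hence "y \<notin> Cs \<or> z \<notin> Cs" using False by auto
    thus ?thesis using True F_perm by (auto simp: F_def)
  next
    case False
    thus ?thesis by (simp add: F_def)
  qed
qed

sublocale Fc: comp_fun_commute F
  by unfold_locales (simp add: fun_eq_iff F_comm)

definition Phi :: "'a multiset \<Rightarrow> 'a \<Rightarrow> 'a" where "Phi M = fold_mset F id M"

lemma Phi_empty[simp]: "Phi {#} = id" by (simp add: Phi_def)
lemma Phi_add_mset: "Phi (add_mset y M) = F y (Phi M)" by (simp add: Phi_def)

lemma Phi_perm: "Phi M permutes Cs"
proof (induction M)
  case empty
  show ?case unfolding Phi_empty by (rule permutes_id)
next
  case (add y M)
  thus ?case unfolding Phi_add_mset by (rule F_perm)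
qed

lemma Phi_union: "Phi (M + N) = Phi M \<circ> Phi (image_mset (pinv (Phi M)) N)"
proof (induction N)
  case empty
  then show ?case by simp
next
  case (add y N)
  define p where "p = Phi M"
  define r where "r = Phi (image_mset (pinv p) N)"
  have p: "p permutes Cs" unfolding p_def by (rule Phi_perm)
  have r: "r permutes Cs" unfolding r_def by (rule Phi_perm)
  have IH: "Phi (M + N) = p \<circ> r" using add unfolding p_def r_def by (simp only:)
  have "Phi (M + add_mset y N) = F y (p \<circ> r)" using IH by (simp add: Phi_add_mset)
  also have "\<dots> = p \<circ> F (pinv p y) r"
  proof (cases "y \<in> Cs")
    case True
    hence "pinv p y \<in> Cs" using permutes_inv[OF p] by (simp add: permutes_in_image)
    then show ?thesis using True p r permutes_compose[OF r p] inv_comp_perm[OF p r]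
      by (simp add: F_def o_assoc)
  next
    case False
    hence "pinv p y \<notin> Cs" using permutes_inv[OF p] by (simp add: permutes_in_image)
    then show ?thesis using False by (simp add: F_def)
  qed
  also have "\<dots> = Phi M \<circ> Phi (image_mset (pinv (Phi M)) (add_mset y N))"
    by (simp add: Phi_add_mset p_def r_def)
  finally show ?case .
qed

lemma Phi_single: "y \<in> Cs \<Longrightarrow> Phi {#y#} = T y"
  by (simp add: Phi_add_mset F_def permutes_id)


lemma funpow_id': "(id ^^ n) = (id :: 'b \<Rightarrow> 'b)"
  by (induction n) auto

lemma perm_funpow: "p permutes Cs \<Longrightarrow> (p ^^ n) permutes Cs"
proof (induction n)
  case 0
  show ?case unfolding funpow.simps(1) by (rule permutes_id)
next
  case (Suc n)
  then show ?case unfolding funpow_Suc_right using permutes_compose by blast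
qed

definition Q :: "'a \<Rightarrow> 'a" where "Q = (\<lambda>z. if z \<in> Cs then opr z z else z)"

lemma Q_perm: "Q permutes Cs"
proof (rule bij_imp_permutes)
  have im: "(\<lambda>z. opr z z) ` Cs = Cs" by (rule sq_surj[OF fin cs])
  hence "inj_on (\<lambda>z. opr z z) Cs" by (intro eq_card_imp_inj_on[OF fin]) (simp add: im)
  hence "bij_betw (\<lambda>z. opr z z) Cs Cs" using im unfolding bij_betw_def by simp
  thus "bij_betw Q Cs Cs" by (rule bij_betw_cong[THEN iffD1, rotated]) (simp add: Q_def)
  show "Q x = x" if "x \<notin> Cs" for x using that by (simp add: Q_def)
qed

lemma perm_order: "p permutes Cs \<Longrightarrow> \<exists>k>0. p ^^ k = id"
proof -
  assume "p permutes Cs"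
  hence "permutation p" using fin permutation_permutes by blast
  then obtain n where "p ^^ n = id" "n > 0" by (rule permutation_is_nilpotent)
  thus ?thesis by blast
qed

definition N0 :: nat where "N0 = (\<Prod>p \<in> {p. p permutes Cs}. (SOME k. 0 < k \<and> p ^^ k = id))"

lemma N0_pos: "0 < N0"
  unfolding N0_def
proof (rule prod_pos)
  fix p assume "p \<in> {p. p permutes Cs}"
  hence "\<exists>k. 0 < k \<and> p ^^ k = id" using perm_order by auto
  from someI_ex[OF this] show "0 < (SOME k. 0 < k \<and> p ^^ k = id)" by blast
qed

lemma N0_id: "p permutes Cs \<Longrightarrow> p ^^ N0 = id"
proof -
  assume p: "p permutes Cs"
  define k where "k = (SOME k. 0 < k \<and> p ^^ k = id)"
  have "\<exists>k. 0 < k \<and> p ^^ k = id" using perm_order p by auto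
  from someI_ex[OF this] have k: "p ^^ k = id" unfolding k_def by blast
  have finP: "finite {p. p permutes Cs}" using finite_permutations[OF fin] .
  have "N0 = k * (\<Prod>q \<in> {p. p permutes Cs} - {p}. (SOME k. 0 < k \<and> q ^^ k = id))"
    unfolding N0_def k_def using prod.remove[OF finP, of p] p by simp
  then obtain m where "N0 = k * m" by blast
  hence "p ^^ N0 = (p ^^ k) ^^ m" by (simp add: funpow_mult)
  thus ?thesis using k funpow_id' by simp
qed

definition d :: nat where "d = 2 * N0 * N0"

lemma d_ge: "2 \<le> d"
  using N0_pos unfolding d_def by (simp add: Suc_leI)

lemma d_pos: "0 < d" using d_ge by simp

lemma rep_inv: "y \<in> Cs \<Longrightarrow> pinv (Phi (replicate_mset k y)) y = (Q ^^ k) y"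
proof (induction k)
  case 0
  then show ?case by simp
next
  case (Suc k)
  define p where "p = Phi (replicate_mset k y)"
  define u where "u = pinv p y"
  have p: "p permutes Cs" unfolding p_def by (rule Phi_perm)
  have u: "u = (Q ^^ k) y" using Suc unfolding u_def p_def by simp
  have uC: "u \<in> Cs" unfolding u using perm_funpow[OF Q_perm] Suc.prems by (simp add: permutes_in_image)
  have "Phi (replicate_mset (Suc k) y) = p \<circ> T u"
    using Suc.prems p by (simp add: Phi_add_mset F_def p_def u_def)
  hence "pinv (Phi (replicate_mset (Suc k) y)) y = pinv (T u) u"
    using inv_comp_perm[OF p T_perm[OF uC]] by (simp add: u_def)
  also have "\<dots> = S u u" unfolding T_def using permutes_inv_inv[OF S_perm[OF uC]] by simp
  also have "\<dots> = Q u" using uC by (simp add: S_def Q_def)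
  finally show ?case using u by simp
qed

lemma rep_add: "Phi (replicate_mset (j + k) y) =
   Phi (replicate_mset j y) \<circ> Phi (replicate_mset k (pinv (Phi (replicate_mset j y)) y))"
proof -
  have "replicate_mset (j + k) y = replicate_mset j y + replicate_mset k y"
    by (simp add: multiset_eq_iff)
  thus ?thesis using Phi_union by simp
qed

lemma rep_N0: "y \<in> Cs \<Longrightarrow> Phi (replicate_mset (N0 * k) y) = (Phi (replicate_mset N0 y)) ^^ k"
proof (induction k)
  case 0
  then show ?case by simp
next
  case (Suc k)
  have "pinv (Phi (replicate_mset (N0 * k) y)) y = ((Q ^^ N0) ^^ k) y"
    using rep_inv[OF Suc.prems] by (simp add: funpow_mult)
  also have "\<dots> = y" using N0_id[OF Q_perm] funpow_id' by simp
  finally have e: "pinv (Phi (replicate_mset (N0 * k) y)) y = y" .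
  have "Phi (replicate_mset (N0 * Suc k) y) = Phi (replicate_mset (N0 * k + N0) y)"
    by (simp add: add.commute)
  also have "\<dots> = Phi (replicate_mset (N0 * k) y) \<circ> Phi (replicate_mset N0 y)"
    using rep_add[of "N0 * k" N0 y] e by simp
  also have "\<dots> = Phi (replicate_mset N0 y) ^^ k \<circ> Phi (replicate_mset N0 y)"
    using Suc by simp
  finally show ?case by (simp only: funpow_Suc_right)
qed

lemma rep_out: "y \<notin> Cs \<Longrightarrow> Phi (replicate_mset k y) = id"
  by (induction k) (simp_all add: Phi_add_mset F_def)

lemma rep_d: "Phi (replicate_mset d y) = id"
proof (cases "y \<in> Cs")
  case True
  have "Phi (replicate_mset d y) = Phi (replicate_mset (N0 * (N0 * 2)) y)"
    unfolding d_def by (simp add: ac_simps)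
  also have "\<dots> = (Phi (replicate_mset N0 y) ^^ N0) ^^ 2"
    unfolding rep_N0[OF True] by (simp add: funpow_mult)
  also have "\<dots> = id" using N0_id[OF Phi_perm] funpow_id' by simp
  finally show ?thesis .
next
  case False
  then show ?thesis by (rule rep_out)
qed

lemma Phi_add_rep: "Phi (M + replicate_mset d y) = Phi M"
  using Phi_union[of M "replicate_mset d y"] rep_d by simp

definition red :: "'a multiset \<Rightarrow> 'a multiset" where
  "red M = Abs_multiset (\<lambda>y. count M y mod d)"

lemma count_red[simp]: "count (red M) y = count M y mod d"
proof -
  have "finite {y. 0 < count M y mod d}"
    by (rule finite_subset[of _ "set_mset M"]) (auto, metis count_eq_zero_iff mod_0 less_irrefl)
  thus ?thesis unfolding red_def by (simp add: count_Abs_multiset)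
qed

lemma set_red: "set_mset (red M) \<subseteq> set_mset M"
proof
  fix x assume "x \<in># red M"
  hence "count M x mod d \<noteq> 0" by (metis count_red count_eq_zero_iff)
  thus "x \<in># M" by (metis count_eq_zero_iff mod_0)
qed

lemma red_id: "(\<And>y. count M y < d) \<Longrightarrow> red M = M"
  by (simp add: multiset_eq_iff)

lemma Phi_red: "Phi (red M) = Phi M"
proof (induction "size M" arbitrary: M rule: less_induct)
  case less
  show ?case
  proof (cases "\<forall>y. count M y < d")
    case True
    then show ?thesis using red_id by simp
  next
    case False
    then obtain y where y: "d \<le> count M y" by (auto simp: not_less)
    define M' where "M' = M - replicate_mset d y"
    have M: "M = M' + replicate_mset d y" unfolding M'_def using y
      by (simp add: multiset_eq_iff)
    have "red M = red M'" unfolding M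
      by (simp add: multiset_eq_iff)
    moreover have "size M' < size M" using M d_pos by simp
    ultimately show ?thesis using less M Phi_add_rep by metis
  qed
qed


lemma count_img: "p permutes Cs \<Longrightarrow> count (image_mset p M) z = count M (pinv p z)"
proof -
  assume p: "p permutes Cs"
  have v: "p -` {z} = {pinv p z}" using permutes_inverses[OF p] by auto
  show ?thesis unfolding count_image_mset v
    by (cases "pinv p z \<in># M") (auto simp: count_eq_zero_iff)
qed

lemma set_img: "p permutes Cs \<Longrightarrow> set_mset M \<subseteq> Cs \<Longrightarrow> set_mset (image_mset p M) \<subseteq> Cs"
  by (auto simp: permutes_in_image)

definition Cm :: "'a multiset set" where "Cm = {M. set_mset M \<subseteq> Cs \<and> (\<forall>y. count M y < d)}"
definition addm :: "'a multiset \<Rightarrow> 'a multiset \<Rightarrow> 'a multiset" where "addm M N = red (M + N)"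
definition mulm :: "'a multiset \<Rightarrow> 'a multiset \<Rightarrow> 'a multiset" where
  "mulm M N = red (M + image_mset (Phi M) N)"
definition negm :: "'a multiset \<Rightarrow> 'a multiset" where
  "negm M = Abs_multiset (\<lambda>y. (d - count M y) mod d)"

lemma count_negm[simp]: "count (negm M) y = (d - count M y) mod d"
proof -
  have "finite {y. 0 < (d - count M y) mod d}"
    by (rule finite_subset[of _ "set_mset M"]) (auto, metis count_eq_zero_iff diff_zero mod_self less_irrefl)
  thus ?thesis unfolding negm_def by (simp add: count_Abs_multiset)
qed

lemma set_negm: "set_mset (negm M) \<subseteq> set_mset M"
proof
  fix x assume "x \<in># negm M"
  hence "(d - count M x) mod d \<noteq> 0" by (metis count_negm count_eq_zero_iff)
  thus "x \<in># M" by (metis count_eq_zero_iff diff_zero mod_self)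
qed

lemma red_Cm: "set_mset M \<subseteq> Cs \<Longrightarrow> red M \<in> Cm"
  unfolding Cm_def using set_red d_pos by auto

lemma CmD: "M \<in> Cm \<Longrightarrow> set_mset M \<subseteq> Cs" "M \<in> Cm \<Longrightarrow> count M y < d"
  unfolding Cm_def by auto

lemma red_Cm_id: "M \<in> Cm \<Longrightarrow> red M = M"
  using red_id CmD by blast

lemma addm_Cm: "M \<in> Cm \<Longrightarrow> N \<in> Cm \<Longrightarrow> addm M N \<in> Cm"
  unfolding addm_def using CmD by (intro red_Cm) auto

lemma mulm_Cm: "M \<in> Cm \<Longrightarrow> N \<in> Cm \<Longrightarrow> mulm M N \<in> Cm"
  unfolding mulm_def using CmD set_img[OF Phi_perm] by (intro red_Cm) (auto simp del: set_image_mset)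

lemma negm_Cm: "M \<in> Cm \<Longrightarrow> negm M \<in> Cm"
  unfolding Cm_def using set_negm d_pos by auto

lemma empty_Cm: "{#} \<in> Cm" unfolding Cm_def using d_pos by auto

lemma single_Cm: "y \<in> Cs \<Longrightarrow> {#y#} \<in> Cm" unfolding Cm_def using d_ge by auto

lemma Phi_mulm': "Phi (M + image_mset (Phi M) N) = Phi M \<circ> Phi N"
proof -
  have "Phi (M + image_mset (Phi M) N) = Phi M \<circ> Phi (image_mset (pinv (Phi M) \<circ> Phi M) N)"
    unfolding Phi_union by (simp add: image_mset.compositionality)
  also have "\<dots> = Phi M \<circ> Phi N" using permutes_inv_o(2)[OF Phi_perm] by simp
  finally show ?thesis .
qed

lemma Phi_mulm: "Phi (mulm M N) = Phi M \<circ> Phi N"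
proof -
  have "Phi (mulm M N) = Phi (M + image_mset (Phi M) N)" unfolding mulm_def by (rule Phi_red)
  also have "\<dots> = Phi M \<circ> Phi (image_mset (pinv (Phi M) \<circ> Phi M) N)"
    unfolding Phi_union by (simp add: image_mset.compositionality)
  also have "\<dots> = Phi M \<circ> Phi N" using permutes_inv_o(2)[OF Phi_perm] by simp
  finally show ?thesis .
qed

lemma mulm_assoc: "mulm (mulm M N) P = mulm M (mulm N P)"
proof (rule multiset_eqI)
  fix z
  define p where "p = Phi M"
  define r where "r = Phi N"
  have p: "p permutes Cs" and r: "r permutes Cs" unfolding p_def r_def by (rule Phi_perm)+
  have ic: "pinv (p \<circ> r) = pinv r \<circ> pinv p" by (rule inv_comp_perm[OF p r])
  show "count (mulm (mulm M N) P) z = count (mulm M (mulm N P)) z"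
    unfolding mulm_def Phi_red Phi_mulm'
    using p r ic permutes_compose[OF r p]
    by (simp add: count_img p_def[symmetric] r_def[symmetric] mod_add_left_eq mod_add_right_eq add.assoc)
qed

lemma mulm_one_left: "M \<in> Cm \<Longrightarrow> mulm {#} M = M"
  unfolding mulm_def by (simp add: red_Cm_id)

lemma mulm_one_right: "M \<in> Cm \<Longrightarrow> mulm M {#} = M"
  unfolding mulm_def by (simp add: red_Cm_id)

definition rinv :: "'a multiset \<Rightarrow> 'a multiset" where
  "rinv M = red (image_mset (pinv (Phi M)) (negm M))"

lemma rinv_Cm: "M \<in> Cm \<Longrightarrow> rinv M \<in> Cm"
  unfolding rinv_def using set_negm CmD set_img[OF permutes_inv[OF Phi_perm]]
  by (intro red_Cm) (meson subset_trans)

lemma mulm_rinv: "M \<in> Cm \<Longrightarrow> mulm M (rinv M) = {#}"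
proof (rule multiset_eqI)
  fix z assume M: "M \<in> Cm"
  define p where "p = Phi M"
  have p: "p permutes Cs" unfolding p_def by (rule Phi_perm)
  have c: "count M z < d" using CmD M by blast
  have "count (mulm M (rinv M)) z = (count M z + (d - count M z) mod d) mod d"
    unfolding mulm_def rinv_def using p permutes_inv[OF p] permutes_inv_inv[OF p]
    by (simp add: count_img p_def[symmetric] permutes_inverses[OF p] mod_add_right_eq)
  also have "\<dots> = 0" using c
    by (cases "count M z = 0") (simp_all add: mod_add_right_eq)
  finally show "count (mulm M (rinv M)) z = count {#} z" by simp
qed

lemma rinv_left: "M \<in> Cm \<Longrightarrow> mulm (rinv M) M = {#}"
proof -
  assume M: "M \<in> Cm"
  define Y where "Y = rinv M"
  define Z where "Z = rinv Y"
  have Y: "Y \<in> Cm" and Z: "Z \<in> Cm" unfolding Y_def Z_def using rinv_Cm M by blast+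
  have "M = mulm M (mulm Y Z)" unfolding Z_def using mulm_rinv[OF Y] mulm_one_right[OF M] by simp
  also have "\<dots> = mulm (mulm M Y) Z" by (simp add: mulm_assoc)
  also have "\<dots> = Z" unfolding Y_def using mulm_rinv[OF M] mulm_one_left[OF Z] by simp
  finally have "M = Z" .
  thus ?thesis using mulm_rinv[OF Y] unfolding Y_def Z_def by simp
qed

definition BR :: "'a multiset ring" where
  "BR = \<lparr>carrier = Cm, Group.monoid.mult = mulm, one = {#}, ring.zero = {#}, ring.add = addm\<rparr>"

lemma BR_simps[simp]: "carrier BR = Cm" "monoid.mult BR = mulm" "one BR = {#}" "ring.zero BR = {#}" "ring.add BR = addm"
  by (simp_all add: BR_def)

lemma BR_ag: "abelian_group BR"
proof (rule abelian_groupI, simp_all)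
  show "\<And>x y. x \<in> Cm \<Longrightarrow> y \<in> Cm \<Longrightarrow> addm x y \<in> Cm" by (rule addm_Cm)
  show "{#} \<in> Cm" by (rule empty_Cm)
  show "addm (addm x y) z = addm x (addm y z)" for x y z
    unfolding addm_def by (simp add: multiset_eq_iff mod_add_left_eq mod_add_right_eq add.assoc)
  show "addm x y = addm y x" for x y unfolding addm_def by (simp add: add.commute)
  show "addm {#} x = x" if "x \<in> Cm" for x unfolding addm_def using red_Cm_id that by simp
  show "\<exists>y\<in>Cm. addm y x = {#}" if x: "x \<in> Cm" for x
  proof (intro bexI)
    show "negm x \<in> Cm" using negm_Cm x .
    show "addm (negm x) x = {#}"
    proof (rule multiset_eqI)
      fix z
      have c: "count x z < d" using CmD x by blast
      show "count (addm (negm x) x) z = count {#} z"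
        unfolding addm_def using c by (cases "count x z = 0") (simp_all add: mod_add_left_eq)
    qed
  qed
qed

lemma BR_group: "group BR"
proof (rule groupI, simp_all)
  show "\<And>x y. x \<in> Cm \<Longrightarrow> y \<in> Cm \<Longrightarrow> mulm x y \<in> Cm" by (rule mulm_Cm)
  show "{#} \<in> Cm" by (rule empty_Cm)
  show "mulm (mulm x y) z = mulm x (mulm y z)" for x y z by (rule mulm_assoc)
  show "mulm {#} x = x" if "x \<in> Cm" for x using mulm_one_left that .
  show "\<exists>y\<in>Cm. mulm y x = {#}" if "x \<in> Cm" for x
    using rinv_Cm rinv_left that by blast
qed

lemma BR_neg: "M \<in> Cm \<Longrightarrow> \<ominus>\<^bsub>BR\<^esub> M = negm M"
proof -
  assume M: "M \<in> Cm"
  have "negm M \<oplus>\<^bsub>BR\<^esub> M = \<zero>\<^bsub>BR\<^esub>"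
  proof -
    have "addm (negm M) M = {#}"
    proof (rule multiset_eqI)
      fix z
      have c: "count M z < d" using CmD M by blast
      show "count (addm (negm M) M) z = count {#} z"
        unfolding addm_def using c by (cases "count M z = 0") (simp_all add: mod_add_left_eq)
    qed
    thus ?thesis by simp
  qed
  thus ?thesis using abelian_group.minus_equality[OF BR_ag] M negm_Cm by simp
qed

lemma arith1: "(m::nat) < d \<Longrightarrow> (((m + n) mod d + (d - m) mod d) mod d + (m + p) mod d) mod d
   = (m + (n + p) mod d) mod d"
proof -
  assume m: "m < d"
  have "(((m + n) mod d + (d - m) mod d) mod d + (m + p) mod d) mod d = ((m + n) + (d - m) + (m + p)) mod d"
    by (simp add: mod_add_left_eq mod_add_right_eq)
  also have "(m + n) + (d - m) + (m + p) = d + (m + (n + p))" using m by simp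
  also have "(d + (m + (n + p))) mod d = (m + (n + p)) mod d" by simp
  also have "\<dots> = (m + (n + p) mod d) mod d" by (simp add: mod_add_right_eq)
  finally show ?thesis .
qed

lemma arith2: "(m::nat) < d \<Longrightarrow> n < d \<Longrightarrow> ((d - m) mod d + (m + n) mod d) mod d = n"
proof -
  assume m: "m < d" and n: "n < d"
  have "((d - m) mod d + (m + n) mod d) mod d = ((d - m) + (m + n)) mod d"
    by (simp add: mod_add_left_eq mod_add_right_eq)
  also have "(d - m) + (m + n) = d + n" using m by simp
  finally show ?thesis using n by simp
qed

lemma BR_brace: "brace BR"
  unfolding brace_def
proof (intro conjI ballI)
  show "abelian_group BR" by (rule BR_ag)
  show "group BR" by (rule BR_group)
  fix a b c assume a: "a \<in> carrier BR" and b: "b \<in> carrier BR" and c: "c \<in> carrier BR"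
  hence a': "a \<in> Cm" and b': "b \<in> Cm" and c': "c \<in> Cm" by simp_all
  define p where "p = Phi a"
  have p: "p permutes Cs" unfolding p_def by (rule Phi_perm)
  show "a \<otimes>\<^bsub>BR\<^esub> (b \<oplus>\<^bsub>BR\<^esub> c) = a \<otimes>\<^bsub>BR\<^esub> b \<oplus>\<^bsub>BR\<^esub> \<ominus>\<^bsub>BR\<^esub> a \<oplus>\<^bsub>BR\<^esub> a \<otimes>\<^bsub>BR\<^esub> c"
  proof (simp add: BR_neg[OF a'], rule multiset_eqI)
    fix z
    have ca: "count a z < d" using CmD a' by blast
    show "count (mulm a (addm b c)) z = count (addm (addm (mulm a b) (negm a)) (mulm a c)) z"
      unfolding mulm_def addm_def using p arith1[OF ca]
      by (simp add: count_img p_def[symmetric])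
  qed
qed

lemma BR_lam: "M \<in> Cm \<Longrightarrow> N \<in> Cm \<Longrightarrow> brace_lambda BR M N = image_mset (Phi M) N"
proof -
  assume M: "M \<in> Cm" and N: "N \<in> Cm"
  define p where "p = Phi M"
  have p: "p permutes Cs" unfolding p_def by (rule Phi_perm)
  show ?thesis unfolding brace_lambda_def
  proof (simp add: BR_neg[OF M], rule multiset_eqI)
    fix z
    have ca: "count M z < d" using CmD M by blast
    have cb: "count N (pinv p z) < d" using CmD N by blast
    show "count (addm (negm M) (mulm M N)) z = count (image_mset (Phi M) N) z"
      unfolding mulm_def addm_def using p arith2[OF ca cb]
      by (simp add: count_img p_def[symmetric])
  qed
qed

lemma BR_cyc: "y \<in> Cs \<Longrightarrow> z \<in> Cs \<Longrightarrow> brace_cycle_op BR {#y#} {#z#} = {#opr y z#}"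
proof -
  assume y: "y \<in> Cs" and z: "z \<in> Cs"
  define Y where "Y = inv\<^bsub>BR\<^esub> {#y#}"
  have Y: "Y \<in> Cm" unfolding Y_def using group.inv_closed[OF BR_group] single_Cm[OF y] by simp
  have "mulm Y {#y#} = {#}" unfolding Y_def using group.l_inv[OF BR_group] single_Cm[OF y] by simp
  hence "Phi Y \<circ> T y = id" using Phi_mulm[of Y "{#y#}"] Phi_single[OF y] by simp
  hence "Phi Y \<circ> T y \<circ> S y = S y" by simp
  hence PY: "Phi Y = S y" unfolding T_def using permutes_inv_o(2)[OF S_perm[OF y]] by (simp add: o_assoc[symmetric])
  have "brace_cycle_op BR {#y#} {#z#} = image_mset (Phi Y) {#z#}"
    unfolding brace_cycle_op_def Y_def[symmetric] using BR_lam[OF Y single_Cm[OF z]] .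
  also have "\<dots> = {#opr y z#}" using PY z by (simp add: S_def)
  finally show ?thesis .
qed

lemma Cm_finite: "finite Cm"
proof -
  have "Cm \<subseteq> (\<Union>n \<in> {..card Cs * d}. multisets_of_size Cs n)"
  proof
    fix M assume M: "M \<in> Cm"
    have sM: "set_mset M \<subseteq> Cs" using CmD M by blast
    have "size M = sum (count M) (set_mset M)" by (simp add: size_multiset_overloaded_eq)
    also have "\<dots> \<le> card (set_mset M) * d"
      using sum_bounded_above[of "set_mset M" "count M" d] CmD(2)[OF M] by (simp add: less_imp_le)
    also have "\<dots> \<le> card Cs * d" using card_mono[OF fin sM] by simp
    finally show "M \<in> (\<Union>n \<in> {..card Cs * d}. multisets_of_size Cs n)"
      unfolding multisets_of_size_def using sM by auto
  qed
  thus ?thesis using finite_multisets_of_size[OF fin] finite_subset by blast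
qed

end



definition tr :: "('b \<Rightarrow> nat) \<Rightarrow> ('b, 'm) ring_scheme \<Rightarrow> nat ring" where
  "tr g R = \<lparr>carrier = g ` carrier R,
     Group.monoid.mult = (\<lambda>a b. g (inv_into (carrier R) g a \<otimes>\<^bsub>R\<^esub> inv_into (carrier R) g b)),
     one = g \<one>\<^bsub>R\<^esub>, ring.zero = g \<zero>\<^bsub>R\<^esub>,
     ring.add = (\<lambda>a b. g (inv_into (carrier R) g a \<oplus>\<^bsub>R\<^esub> inv_into (carrier R) g b))\<rparr>"

lemma (in brc) brc_brace: "brace R"
  unfolding brace_def using distr abelian_group_axioms is_group by blast

lemma (in brc) tr_props:
  assumes g: "inj_on g (carrier R)"
  shows "brace (tr g R)"
    and "\<And>a b. a \<in> carrier R \<Longrightarrow> b \<in> carrier R \<Longrightarrow>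
          brace_cycle_op (tr g R) (g a) (g b) = g (brace_cycle_op R a b)"
    and "carrier (tr g R) = g ` carrier R"
proof -
  have hg[simp]: "inv_into (carrier R) g (g a) = a" if "a \<in> carrier R" for a
    using g that by (simp add: inv_into_f_f)
  have C[simp]: "carrier (tr g R) = g ` carrier R" by (simp add: tr_def)
  show "carrier (tr g R) = g ` carrier R" by simp
  have M[simp]: "g a \<otimes>\<^bsub>tr g R\<^esub> g b = g (a \<otimes> b)" if "a \<in> carrier R" "b \<in> carrier R" for a b
    using that by (simp add: tr_def)
  have A[simp]: "g a \<oplus>\<^bsub>tr g R\<^esub> g b = g (a \<oplus> b)" if "a \<in> carrier R" "b \<in> carrier R" for a b
    using that by (simp add: tr_def)
  have O[simp]: "\<one>\<^bsub>tr g R\<^esub> = g \<one>" by (simp add: tr_def)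
  have Z[simp]: "\<zero>\<^bsub>tr g R\<^esub> = g \<zero>" by (simp add: tr_def)
  have ag: "abelian_group (tr g R)"
  proof (rule abelian_groupI)
    show "x \<oplus>\<^bsub>tr g R\<^esub> y \<in> carrier (tr g R)" if "x \<in> carrier (tr g R)" "y \<in> carrier (tr g R)" for x y
      using that by auto
    show "\<zero>\<^bsub>tr g R\<^esub> \<in> carrier (tr g R)" by simp
    show "x \<oplus>\<^bsub>tr g R\<^esub> y \<oplus>\<^bsub>tr g R\<^esub> z = x \<oplus>\<^bsub>tr g R\<^esub> (y \<oplus>\<^bsub>tr g R\<^esub> z)"
      if "x \<in> carrier (tr g R)" "y \<in> carrier (tr g R)" "z \<in> carrier (tr g R)" for x y z
      using that by (auto simp: a_assoc)
    show "x \<oplus>\<^bsub>tr g R\<^esub> y = y \<oplus>\<^bsub>tr g R\<^esub> x"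
      if "x \<in> carrier (tr g R)" "y \<in> carrier (tr g R)" for x y
      using that by (auto simp: a_comm)
    show "\<zero>\<^bsub>tr g R\<^esub> \<oplus>\<^bsub>tr g R\<^esub> x = x" if "x \<in> carrier (tr g R)" for x
      using that by auto
    show "\<exists>y\<in>carrier (tr g R). y \<oplus>\<^bsub>tr g R\<^esub> x = \<zero>\<^bsub>tr g R\<^esub>" if x: "x \<in> carrier (tr g R)" for x
    proof -
      obtain a where a: "a \<in> carrier R" "x = g a" using x by auto
      show ?thesis using a by (intro bexI[of _ "g (\<ominus> a)"]) (auto simp: l_neg)
    qed
  qed
  have gr: "group (tr g R)"
  proof (rule groupI)
    show "x \<otimes>\<^bsub>tr g R\<^esub> y \<in> carrier (tr g R)" if "x \<in> carrier (tr g R)" "y \<in> carrier (tr g R)" for x y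
      using that by auto
    show "\<one>\<^bsub>tr g R\<^esub> \<in> carrier (tr g R)" by simp
    show "x \<otimes>\<^bsub>tr g R\<^esub> y \<otimes>\<^bsub>tr g R\<^esub> z = x \<otimes>\<^bsub>tr g R\<^esub> (y \<otimes>\<^bsub>tr g R\<^esub> z)"
      if "x \<in> carrier (tr g R)" "y \<in> carrier (tr g R)" "z \<in> carrier (tr g R)" for x y z
      using that by (auto simp: m_assoc)
    show "\<one>\<^bsub>tr g R\<^esub> \<otimes>\<^bsub>tr g R\<^esub> x = x" if "x \<in> carrier (tr g R)" for x
      using that by auto
    show "\<exists>y\<in>carrier (tr g R). y \<otimes>\<^bsub>tr g R\<^esub> x = \<one>\<^bsub>tr g R\<^esub>" if x: "x \<in> carrier (tr g R)" for x
    proof -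
      obtain a where a: "a \<in> carrier R" "x = g a" using x by auto
      show ?thesis using a by (intro bexI[of _ "g (inv a)"]) auto
    qed
  qed
  have N: "\<ominus>\<^bsub>tr g R\<^esub> (g a) = g (\<ominus> a)" if a: "a \<in> carrier R" for a
    using abelian_group.minus_equality[OF ag, of "g (\<ominus> a)" "g a"] a by (simp add: l_neg)
  have I: "inv\<^bsub>tr g R\<^esub> (g a) = g (inv a)" if a: "a \<in> carrier R" for a
    using group.inv_equality[OF gr, of "g (inv a)" "g a"] a by simp
  show "brace (tr g R)"
    unfolding brace_def
  proof (intro conjI ag gr ballI)
    fix x y z assume "x \<in> carrier (tr g R)" "y \<in> carrier (tr g R)" "z \<in> carrier (tr g R)"
    then obtain a b c where abc: "a \<in> carrier R" "b \<in> carrier R" "c \<in> carrier R"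
      "x = g a" "y = g b" "z = g c" by auto
    show "x \<otimes>\<^bsub>tr g R\<^esub> (y \<oplus>\<^bsub>tr g R\<^esub> z) =
        x \<otimes>\<^bsub>tr g R\<^esub> y \<oplus>\<^bsub>tr g R\<^esub> \<ominus>\<^bsub>tr g R\<^esub> x \<oplus>\<^bsub>tr g R\<^esub> x \<otimes>\<^bsub>tr g R\<^esub> z"
      using abc by (simp add: N distr)
  qed
  show "brace_cycle_op (tr g R) (g a) (g b) = g (brace_cycle_op R a b)"
    if "a \<in> carrier R" "b \<in> carrier R" for a b
    using that unfolding brace_cycle_op_def brace_lambda_def by (simp add: I N)
qed

lemma add_monoid_upd: "add_monoid (R\<lparr>carrier := H\<rparr>) = (add_monoid R)\<lparr>carrier := H\<rparr>"
  by simp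

lemma (in brc) restrict:
  assumes x0: "x0 \<in> carrier R"
  defines "H \<equiv> brace_gen R x0"
  shows "brace (R\<lparr>carrier := H\<rparr>)" "brace_gen (R\<lparr>carrier := H\<rparr>) x0 = H" "x0 \<in> H"
    "H \<subseteq> carrier R" "additive_subgroup H R" "subgroup H R"
    "\<And>a b. a \<in> H \<Longrightarrow> b \<in> H \<Longrightarrow> brace_lambda (R\<lparr>carrier := H\<rparr>) a b = brace_lambda R a b"
    "\<And>a b. a \<in> H \<Longrightarrow> b \<in> H \<Longrightarrow> brace_cycle_op (R\<lparr>carrier := H\<rparr>) a b = brace_cycle_op R a b"
proof -
  define fam where "fam = {S. x0 \<in> S \<and> additive_subgroup S R \<and> subgroup S R}"
  have Hf: "H = \<Inter>fam" unfolding H_def brace_gen_def fam_def by simp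
  have Cf: "carrier R \<in> fam" unfolding fam_def using x0 subgroup_self add.subgroup_self
    by (auto intro: additive_subgroupI)
  show sub: "subgroup H R" unfolding Hf
    by (rule subgroups_Inter) (use Cf in \<open>auto simp: fam_def\<close>)
  show asub: "additive_subgroup H R" unfolding Hf
    by (rule additive_subgroupI, rule add.subgroups_Inter)
       (use Cf in \<open>auto simp: fam_def additive_subgroup_def\<close>)
  show xH: "x0 \<in> H" unfolding Hf fam_def by auto
  show HC: "H \<subseteq> carrier R" using subgroup.subset[OF sub] .
  define R1 where "R1 = R\<lparr>carrier := H\<rparr>"
  have agR1: "abelian_group R1"
  proof (rule abelian_groupI, simp_all add: R1_def)
    show "\<And>x y. x \<in> H \<Longrightarrow> y \<in> H \<Longrightarrow> x \<oplus> y \<in> H" using additive_subgroup.a_closed[OF asub] .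
    show "\<zero> \<in> H" using additive_subgroup.zero_closed[OF asub] .
    show "\<And>x y z. x \<in> H \<Longrightarrow> y \<in> H \<Longrightarrow> z \<in> H \<Longrightarrow> x \<oplus> y \<oplus> z = x \<oplus> (y \<oplus> z)"
      using HC by (meson a_assoc subsetD)
    show "\<And>x y. x \<in> H \<Longrightarrow> y \<in> H \<Longrightarrow> x \<oplus> y = y \<oplus> x" using HC by (meson a_comm subsetD)
    show "\<And>x. x \<in> H \<Longrightarrow> \<zero> \<oplus> x = x" using HC by auto
    show "\<And>x. x \<in> H \<Longrightarrow> \<exists>y\<in>H. y \<oplus> x = \<zero>"
      using HC additive_subgroup.a_inv_closed[OF asub] by (meson l_neg subsetD)
  qed
  have grR1: "group R1" unfolding R1_def by (rule subgroup.subgroup_is_group[OF sub is_group])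
  have NR1: "\<ominus>\<^bsub>R1\<^esub> a = \<ominus> a" if a: "a \<in> H" for a
  proof -
    have "\<ominus> a \<oplus>\<^bsub>R1\<^esub> a = \<zero>\<^bsub>R1\<^esub>" using a HC by (auto simp: R1_def l_neg)
    thus ?thesis using abelian_group.minus_equality[OF agR1] a additive_subgroup.a_inv_closed[OF asub]
      by (simp add: R1_def)
  qed
  have IR1: "inv\<^bsub>R1\<^esub> a = inv a" if a: "a \<in> H" for a
    unfolding R1_def using m_inv_consistent[OF sub a] .
  show "brace (R\<lparr>carrier := H\<rparr>)"
    unfolding R1_def[symmetric] brace_def
  proof (intro conjI agR1 grR1 ballI)
    fix a b c assume "a \<in> carrier R1" "b \<in> carrier R1" "c \<in> carrier R1"
    hence abc: "a \<in> H" "b \<in> H" "c \<in> H" by (simp_all add: R1_def)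
    show "a \<otimes>\<^bsub>R1\<^esub> (b \<oplus>\<^bsub>R1\<^esub> c) = a \<otimes>\<^bsub>R1\<^esub> b \<oplus>\<^bsub>R1\<^esub> \<ominus>\<^bsub>R1\<^esub> a \<oplus>\<^bsub>R1\<^esub> a \<otimes>\<^bsub>R1\<^esub> c"
      using abc HC NR1 by (simp add: R1_def distr subsetD)
  qed
  show LR1: "brace_lambda (R\<lparr>carrier := H\<rparr>) a b = brace_lambda R a b" if "a \<in> H" "b \<in> H" for a b
    using that NR1 unfolding R1_def[symmetric] brace_lambda_def by (simp add: R1_def)
  show "brace_cycle_op (R\<lparr>carrier := H\<rparr>) a b = brace_cycle_op R a b" if ab: "a \<in> H" "b \<in> H" for a b
  proof -
    have "inv a \<in> H" using subgroup.m_inv_closed[OF sub ab(1)] .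
    thus ?thesis unfolding brace_cycle_op_def using IR1[OF ab(1)] LR1[OF _ ab(2)] by (simp add: R1_def)
  qed
  show "brace_gen (R\<lparr>carrier := H\<rparr>) x0 = H"
  proof
    have s1: "subgroup H R1" using group.subgroup_self[OF grR1] by (simp add: R1_def)
    have s2: "additive_subgroup H R1"
      using group.subgroup_self[OF abelian_group.a_group[OF agR1]]
      by (intro additive_subgroupI) (simp add: R1_def add_monoid_upd)
    show "brace_gen (R\<lparr>carrier := H\<rparr>) x0 \<subseteq> H"
      unfolding R1_def[symmetric] brace_gen_def using s1 s2 xH by blast
    show "H \<subseteq> brace_gen (R\<lparr>carrier := H\<rparr>) x0"
      unfolding brace_gen_def
    proof (rule Inter_greatest)
      fix S assume "S \<in> {S. x0 \<in> S \<and> additive_subgroup S (R\<lparr>carrier := H\<rparr>) \<and> subgroup S (R\<lparr>carrier := H\<rparr>)}"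
      hence S: "x0 \<in> S" "additive_subgroup S (R\<lparr>carrier := H\<rparr>)" "subgroup S (R\<lparr>carrier := H\<rparr>)" by auto
      have "subgroup S R" using incl_subgroup[OF sub S(3)] .
      moreover have "additive_subgroup S R"
      proof (rule additive_subgroupI)
        have S2: "subgroup S ((add_monoid R)\<lparr>carrier := H\<rparr>)"
          using S(2) unfolding additive_subgroup_def add_monoid_upd .
        show "subgroup S (add_monoid R)"
          by (rule add.incl_subgroup[OF additive_subgroup.a_subgroup[OF asub] S2])
      qed
      ultimately have "S \<in> fam" using S(1) unfolding fam_def by simp
      thus "H \<subseteq> S" unfolding Hf by blast
    qed
  qed
qed



lemma (in brc) final_fwd:
  assumes fin: "finite (carrier R)" and cs: "cycle_set Cs opr" "finite Cs" and x: "x \<in> Cs"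
    and gen: "Cs = gen_cycle Cs opr x"
    and inj: "inj_on f Cs" and fC: "f ` Cs \<subseteq> carrier R"
    and hom: "\<forall>y\<in>Cs. \<forall>z\<in>Cs. f (opr y z) = brace_cycle_op R (f y) (f z)"
  defines "H \<equiv> brace_gen R (f x)"
  shows "finite (carrier (R\<lparr>carrier := H\<rparr>)) \<and> brace (R\<lparr>carrier := H\<rparr>) \<and>
       inj_on f Cs \<and> f ` Cs \<subseteq> carrier (R\<lparr>carrier := H\<rparr>) \<and>
       (\<forall>y\<in>Cs. \<forall>z\<in>Cs. f (opr y z) = brace_cycle_op (R\<lparr>carrier := H\<rparr>) (f y) (f z)) \<and>
       f ` Cs = {brace_lambda (R\<lparr>carrier := H\<rparr>) b (f x) | b. b \<in> carrier (R\<lparr>carrier := H\<rparr>)} \<and>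
       carrier (R\<lparr>carrier := H\<rparr>) = brace_gen (R\<lparr>carrier := H\<rparr>) (f x)"
proof -
  have fx: "f x \<in> carrier R" using fC x by auto
  note rs = restrict[OF fx, folded H_def]
  have HC: "H \<subseteq> carrier R" by (rule rs(4))
  have finH: "finite H" using finite_subset[OF HC fin] .
  have brR: "brace (R\<lparr>carrier := H\<rparr>)" by (rule rs(1))
  have sub: "subgroup H R" and asub: "additive_subgroup H R" by (rule rs(6), rule rs(5))
  have genC: "Cs \<subseteq> Z" if "Z \<subseteq> Cs" "x \<in> Z" "\<And>y z. y \<in> Z \<Longrightarrow> z \<in> Z \<Longrightarrow> opr y z \<in> Z" for Z
    using gen_cycle_props(4)[OF cs x that] gen by simp
  have Hcl: "brace_cycle_op R a b \<in> H" if "a \<in> H" "b \<in> H" for a b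
  proof -
    have "inv a \<in> H" using subgroup.m_inv_closed[OF sub that(1)] .
    moreover have "inv a \<otimes> b \<in> H" using subgroup.m_closed[OF sub] calculation that(2) by blast
    ultimately show ?thesis unfolding brace_cycle_op_def brace_lambda_def
      using additive_subgroup.a_closed[OF asub] additive_subgroup.a_inv_closed[OF asub] by blast
  qed
  have fH: "f ` Cs \<subseteq> H"
  proof -
    have "Cs \<subseteq> {y \<in> Cs. f y \<in> H}"
    proof (rule genC)
      show "x \<in> {y \<in> Cs. f y \<in> H}" using x rs(3) by simp
      show "opr y z \<in> {y \<in> Cs. f y \<in> H}" if "y \<in> {y \<in> Cs. f y \<in> H}" "z \<in> {y \<in> Cs. f y \<in> H}" for y z
        using that hom Hcl cycle_setD(2)[OF cs(1)] by auto
    qed auto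
    thus ?thesis by auto
  qed
  have orb1: "f ` Cs \<subseteq> {brace_lambda (R\<lparr>carrier := H\<rparr>) b (f x) | b. b \<in> carrier (R\<lparr>carrier := H\<rparr>)}"
  proof -
    define Z where "Z = {y \<in> Cs. \<exists>b\<in>H. f y = lam b (f x)}"
    have "Cs \<subseteq> Z"
    proof (rule genC)
      show "Z \<subseteq> Cs" unfolding Z_def by auto
      show "x \<in> Z"
      proof -
        have "f x = lam \<one> (f x)" using lam_one[OF fx] by simp
        thus ?thesis unfolding Z_def using x subgroup.one_closed[OF sub] by blast
      qed
      show "opr y z \<in> Z" if yz: "y \<in> Z" "z \<in> Z" for y z
      proof -
        obtain b where b: "b \<in> H" "f z = lam b (f x)" using yz(2) Z_def by auto
        have y: "y \<in> Cs" and z: "z \<in> Cs" using yz Z_def by auto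
        have fy: "f y \<in> H" using fH y by auto
        have iy: "inv (f y) \<in> H" using subgroup.m_inv_closed[OF sub fy] .
        have "f (opr y z) = lam (inv (f y)) (lam b (f x))"
          using hom y z b unfolding brace_cycle_op_def by simp
        also have "\<dots> = lam (inv (f y) \<otimes> b) (f x)"
          using lam_mult iy b(1) HC fx by (simp add: subsetD)
        finally show ?thesis unfolding Z_def using cycle_setD(2)[OF cs(1) y z]
            subgroup.m_closed[OF sub iy b(1)] by auto
      qed
    qed
    show ?thesis
    proof
      fix w assume "w \<in> f ` Cs"
      then obtain y where y: "y \<in> Cs" "w = f y" by blast
      then obtain b where b: "b \<in> H" "f y = lam b (f x)" using \<open>Cs \<subseteq> Z\<close> unfolding Z_def by blast
      have "w = brace_lambda (R\<lparr>carrier := H\<rparr>) b (f x)" using rs(7)[OF b(1) rs(3)] b y by simp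
      moreover have "b \<in> carrier (R\<lparr>carrier := H\<rparr>)" using b by simp
      ultimately show "w \<in> {brace_lambda (R\<lparr>carrier := H\<rparr>) b (f x) | b. b \<in> carrier (R\<lparr>carrier := H\<rparr>)}"
        by blast
    qed
  qed
  have orb2: "{brace_lambda (R\<lparr>carrier := H\<rparr>) b (f x) | b. b \<in> carrier (R\<lparr>carrier := H\<rparr>)} \<subseteq> f ` Cs"
  proof
    fix w assume "w \<in> {brace_lambda (R\<lparr>carrier := H\<rparr>) b (f x) | b. b \<in> carrier (R\<lparr>carrier := H\<rparr>)}"
    then obtain b where b: "b \<in> H" "w = brace_lambda (R\<lparr>carrier := H\<rparr>) b (f x)" by auto
    show "w \<in> f ` Cs" unfolding b(2)
    proof (rule brc.orbit_in[OF brace_brc[OF brR]])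
      show "finite (carrier (R\<lparr>carrier := H\<rparr>))" using finH by simp
      show "f ` Cs \<subseteq> carrier (R\<lparr>carrier := H\<rparr>)" using fH by simp
      show "brace_lambda (R\<lparr>carrier := H\<rparr>) (inv\<^bsub>R\<lparr>carrier := H\<rparr>\<^esub> y) z \<in> f ` Cs"
        if yz: "y \<in> f ` Cs" "z \<in> f ` Cs" for y z
      proof -
        obtain u v where uv: "u \<in> Cs" "v \<in> Cs" "y = f u" "z = f v" using yz by blast
        have "brace_lambda (R\<lparr>carrier := H\<rparr>) (inv\<^bsub>R\<lparr>carrier := H\<rparr>\<^esub> y) z
            = brace_cycle_op (R\<lparr>carrier := H\<rparr>) y z" unfolding brace_cycle_op_def ..
        also have "\<dots> = brace_cycle_op R y z" using rs(8) fH uv by auto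
        also have "\<dots> = f (opr u v)" using hom uv by simp
        finally show ?thesis using cycle_setD(2)[OF cs(1) uv(1,2)] by auto
      qed
      show "f x \<in> f ` Cs" using x by simp
      show "b \<in> brace_gen (R\<lparr>carrier := H\<rparr>) (f x)" using rs(2) b(1) by simp
    qed
  qed
  show ?thesis
  proof (intro conjI)
    show "finite (carrier (R\<lparr>carrier := H\<rparr>))" using finH by simp
    show "brace (R\<lparr>carrier := H\<rparr>)" by (rule brR)
    show "inj_on f Cs" by (rule inj)
    show "f ` Cs \<subseteq> carrier (R\<lparr>carrier := H\<rparr>)" using fH by simp
    show "\<forall>y\<in>Cs. \<forall>z\<in>Cs. f (opr y z) = brace_cycle_op (R\<lparr>carrier := H\<rparr>) (f y) (f z)"
    proof (intro ballI)
      fix y z assume y: "y \<in> Cs" and z: "z \<in> Cs"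
      have "f y \<in> H" "f z \<in> H" using fH y z by auto
      thus "f (opr y z) = brace_cycle_op (R\<lparr>carrier := H\<rparr>) (f y) (f z)"
        using hom y z rs(8) by simp
    qed
    show "f ` Cs = {brace_lambda (R\<lparr>carrier := H\<rparr>) b (f x) | b. b \<in> carrier (R\<lparr>carrier := H\<rparr>)}"
      using orb1 orb2 by (rule subset_antisym)
    show "carrier (R\<lparr>carrier := H\<rparr>) = brace_gen (R\<lparr>carrier := H\<rparr>) (f x)" using rs(2) by simp
  qed
qed

lemma final_bwd:
  fixes R :: "('b, 'm) ring_scheme"
  assumes cs: "cycle_set Cs opr" "finite Cs" and x: "x \<in> Cs"
    and fin: "finite (carrier R)" and br: "brace R"
    and inj: "inj_on f Cs" and fC: "f ` Cs \<subseteq> carrier R"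
    and hom: "\<forall>y\<in>Cs. \<forall>z\<in>Cs. f (opr y z) = brace_cycle_op R (f y) (f z)"
    and orb: "f ` Cs = {brace_lambda R b (f x) | b. b \<in> carrier R}"
    and gen: "carrier R = brace_gen R (f x)"
  shows "Cs = gen_cycle Cs opr x"
proof
  define G where "G = gen_cycle Cs opr x"
  have GC: "G \<subseteq> Cs" and xG: "x \<in> G" and Gcl: "\<And>y z. y \<in> G \<Longrightarrow> z \<in> G \<Longrightarrow> opr y z \<in> G"
    using gen_cycle_props[OF cs x] unfolding G_def by auto
  show "gen_cycle Cs opr x \<subseteq> Cs" using GC G_def by simp
  show "Cs \<subseteq> gen_cycle Cs opr x"
  proof
    fix y assume y: "y \<in> Cs"
    then obtain b where b: "b \<in> carrier R" "f y = brace_lambda R b (f x)" using orb by blast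
    have "brace_lambda R b (f x) \<in> f ` G"
    proof (rule brc.orbit_in[OF brace_brc[OF br] fin])
      show "f ` G \<subseteq> carrier R" using fC GC by auto
      show "brace_lambda R (inv\<^bsub>R\<^esub> u) v \<in> f ` G" if uv0: "u \<in> f ` G" "v \<in> f ` G" for u v
      proof -
        obtain u' v' where uv: "u' \<in> G" "v' \<in> G" "u = f u'" "v = f v'" using uv0 by blast
        have "u' \<in> Cs" "v' \<in> Cs" using uv GC by auto
        hence "brace_lambda R (inv\<^bsub>R\<^esub> u) v = f (opr u' v')"
          using hom uv unfolding brace_cycle_op_def by simp
        thus ?thesis using Gcl uv by auto
      qed
      show "f x \<in> f ` G" using xG by simp
      show "b \<in> brace_gen R (f x)" using b gen by simp
    qed
    then obtain y' where y': "y' \<in> G" "f y = f y'" using b by auto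
    hence "y = y'" using inj y GC by (auto dest: inj_onD)
    thus "y \<in> gen_cycle Cs opr x" using y' G_def by simp
  qed
qed

lemma final_fwd_main:
  fixes Cs :: "'a set" and opr :: "'a \<Rightarrow> 'a \<Rightarrow> 'a" and x :: 'a
  assumes "cycle_set Cs opr" and "finite Cs" and "x \<in> Cs"
    and gen: "Cs = gen_cycle Cs opr x"
  shows "(\<exists>(R :: nat ring) (f :: 'a \<Rightarrow> nat).
       finite (carrier R) \<and> brace R \<and>
       inj_on f Cs \<and> f ` Cs \<subseteq> carrier R \<and>
       (\<forall>y\<in>Cs. \<forall>z\<in>Cs. f (opr y z) = brace_cycle_op R (f y) (f z)) \<and>
       f ` Cs = {brace_lambda R b (f x) | b. b \<in> carrier R} \<and>
       carrier R = brace_gen R (f x))"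
proof -
  interpret F: fcs Cs opr using assms by unfold_locales
  interpret B: brc F.BR by (rule brace_brc[OF F.BR_brace])
  from finite_imp_inj_to_nat_seg[OF F.Cm_finite]
  obtain g :: "'a multiset \<Rightarrow> nat" and n where g: "g ` F.Cm = {i. i < n}" "inj_on g F.Cm"
    by (elim exE conjE)
  have gC: "inj_on g (carrier F.BR)" using g(2) by (simp only: F.BR_simps)
  define R0 where "R0 = tr g F.BR"
  have br0: "brace R0" unfolding R0_def by (rule B.tr_props(1)[OF gC])
  have C0: "carrier R0 = g ` F.Cm" unfolding R0_def B.tr_props(3)[OF gC] by (simp only: F.BR_simps)
  have cyc0: "brace_cycle_op R0 (g a) (g b) = g (brace_cycle_op F.BR a b)" if "a \<in> F.Cm" "b \<in> F.Cm" for a b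
    unfolding R0_def using that by (intro B.tr_props(2)[OF gC]) (simp_all only: F.BR_simps)
  define f where "f = (\<lambda>y. g {#y#})"
  have fin0: "finite (carrier R0)" using C0 F.Cm_finite by simp
  have inj: "inj_on f Cs"
  proof (rule inj_onI)
    fix y z assume y: "y \<in> Cs" and z: "z \<in> Cs" and e: "f y = f z"
    have "{#y#} = {#z#}" by (rule inj_onD[OF g(2) e[unfolded f_def] F.single_Cm[OF y] F.single_Cm[OF z]])
    thus "y = z" by simp
  qed
  have fC: "f ` Cs \<subseteq> carrier R0"
  proof (rule image_subsetI)
    fix y assume "y \<in> Cs"
    thus "f y \<in> carrier R0" unfolding C0 f_def by (intro imageI F.single_Cm)
  qed
  have hom: "\<forall>y\<in>Cs. \<forall>z\<in>Cs. f (opr y z) = brace_cycle_op R0 (f y) (f z)"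
  proof (intro ballI)
    fix y z assume y: "y \<in> Cs" and z: "z \<in> Cs"
    show "f (opr y z) = brace_cycle_op R0 (f y) (f z)"
      unfolding f_def cyc0[OF F.single_Cm[OF y] F.single_Cm[OF z]] F.BR_cyc[OF y z] ..
  qed
  show ?thesis
    using brc.final_fwd[OF brace_brc[OF br0] fin0 assms(1-3) gen inj fC hom]
    apply -
    apply (rule exI[where x="R0\<lparr>carrier := brace_gen R0 (f x)\<rparr>"])
    apply (rule exI[where x=f])
    apply (elim conjE)
    apply (intro conjI)
          apply assumption+
    done
qed

lemma final_bwd_main:
  fixes Cs :: "'a set" and opr :: "'a \<Rightarrow> 'a \<Rightarrow> 'a" and x :: 'a
  assumes "cycle_set Cs opr" and "finite Cs" and "x \<in> Cs"
    and ex: "(\<exists>(R :: nat ring) (f :: 'a \<Rightarrow> nat).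
       finite (carrier R) \<and> brace R \<and>
       inj_on f Cs \<and> f ` Cs \<subseteq> carrier R \<and>
       (\<forall>y\<in>Cs. \<forall>z\<in>Cs. f (opr y z) = brace_cycle_op R (f y) (f z)) \<and>
       f ` Cs = {brace_lambda R b (f x) | b. b \<in> carrier R} \<and>
       carrier R = brace_gen R (f x))"
  shows "Cs = gen_cycle Cs opr x"
proof -
  from ex obtain R :: "nat ring" and f :: "'a \<Rightarrow> nat" where
    h: "finite (carrier R)" "brace R" "inj_on f Cs" "f ` Cs \<subseteq> carrier R"
       "\<forall>y\<in>Cs. \<forall>z\<in>Cs. f (opr y z) = brace_cycle_op R (f y) (f z)"
       "f ` Cs = {brace_lambda R b (f x) | b. b \<in> carrier R}"
       "carrier R = brace_gen R (f x)" by (elim exE conjE)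
  show ?thesis by (rule final_bwd[OF assms(1-3) h])
qed

theorem mainTheorem6:
  fixes Cs :: "'a set" and opr :: "'a \<Rightarrow> 'a \<Rightarrow> 'a" and x :: 'a
  assumes "cycle_set Cs opr" and "finite Cs" and "x \<in> Cs"
  shows "Cs = gen_cycle Cs opr x \<longleftrightarrow>
    (\<exists>(R :: nat ring) (f :: 'a \<Rightarrow> nat).
       finite (carrier R) \<and> brace R \<and>
       inj_on f Cs \<and> f ` Cs \<subseteq> carrier R \<and>
       (\<forall>y\<in>Cs. \<forall>z\<in>Cs. f (opr y z) = brace_cycle_op R (f y) (f z)) \<and>
       f ` Cs = {brace_lambda R b (f x) | b. b \<in> carrier R} \<and>
       carrier R = brace_gen R (f x))"
  by (rule iffI[OF final_fwd_main[OF assms] final_bwd_main[OF assms]])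


end
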